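(* Let $\mathcal{L}$ be a logic, $\mathcal{Q}$ an involution lattice, and $f:\mathcal{L}\to\mathcal{Q}$ an observable. Then for all $A,B\in\mathcal{L}$: (a) $f$ is monotone: $A\le B\Rightarrow f(A)\le f(B)$; (b) if $\mathcal{L}$ is Boolean, then $f(A\vee B)=f(A)\vee f(B)$; (c) $f(A^\perp)\le f(A)^\perp$, and if $\mathcal{Q}$ is a logic then $f(A^\perp)=f(A)^\perp$; (d) if $\mathcal{L}$ is Boolean and $\mathcal{Q}$ is a logic, then $f$ is a logic homomorphism.
   Context: An involution lattice is a $\sigma$-complete bounded lattice (with $0,1$) carrying an order-reversing involution $A\mapsto A^\perp$ ($A^{\perp\perp}=A$, $A\le B\Rightarrow B^\perp\le A^\perp$), not necessarily a complement. A logic is an involution lattice in which $\perp$ is an orthocomplementation ($A\wedge A^\perp=0$, $A\vee A^\perp=1$) and which is orthomodular ($A\le B\Rightarrow B=A\vee(A^\perp\wedge B)$); it is Boolean if moreover distributive. $A,B$ are separated if $A\le B^\perp$; a subset is separated if any two distinct elements are separated. An observable $f:\mathcal{L}\to\mathcal{Q}$ is a map with (i) $f(0)=0$, $f(1)=1$; (ii) $f(\bigvee_{A\in\mathcal{L}_0}A)=\bigvee_{A\in\mathcal{L}_0}f(A)$ for every countable separated $\mathcal{L}_0\subset\mathcal{L}$; (iii) $A\le B^\perp\Rightarrow f(A)\le f(B)^\perp$. A logic homomorphism preserves $0,1$, $\perp$, and binary joins and meets. *)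

theory Defs
  imports Main "HOL-Library.Countable_Set"
begin

definition is_lub :: "'a::order set \<Rightarrow> 'a \<Rightarrow> bool" where
  "is_lub S x \<longleftrightarrow> (\<forall>y\<in>S. y \<le> x) \<and> (\<forall>z. (\<forall>y\<in>S. y \<le> z) \<longrightarrow> x \<le> z)"

text \<open>The join of a set (meaningful when the least upper bound exists).\<close>
definition lub :: "'a::order set \<Rightarrow> 'a" where
  "lub S = (THE x. is_lub S x)"

definition sigma_complete :: "'a::order itself \<Rightarrow> bool" where
  "sigma_complete _ \<longleftrightarrow> (\<forall>S::'a set. countable S \<longrightarrow> (\<exists>x. is_lub S x))"

definition involution_lattice :: "('a::bounded_lattice \<Rightarrow> 'a) \<Rightarrow> bool" where
  "involution_lattice perp \<longleftrightarrow>
     sigma_complete TYPE('a) \<and>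
     (\<forall>A. perp (perp A) = A) \<and>
     (\<forall>A B. A \<le> B \<longrightarrow> perp B \<le> perp A)"

definition is_logic :: "('a::bounded_lattice \<Rightarrow> 'a) \<Rightarrow> bool" where
  "is_logic perp \<longleftrightarrow>
     involution_lattice perp \<and>
     (\<forall>A. inf A (perp A) = bot \<and> sup A (perp A) = top) \<and>
     (\<forall>A B. A \<le> B \<longrightarrow> B = sup A (inf (perp A) B))"

definition is_boolean_logic :: "('a::bounded_lattice \<Rightarrow> 'a) \<Rightarrow> bool" where
  "is_boolean_logic perp \<longleftrightarrow>
     is_logic perp \<and> (\<forall>A B C::'a. sup A (inf B C) = inf (sup A B) (sup A C))"

definition separated_set :: "('a::bounded_lattice \<Rightarrow> 'a) \<Rightarrow> 'a set \<Rightarrow> bool" where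
  "separated_set perp S \<longleftrightarrow> (\<forall>A\<in>S. \<forall>B\<in>S. A \<noteq> B \<longrightarrow> A \<le> perp B)"

definition observable ::
  "('a::bounded_lattice \<Rightarrow> 'a) \<Rightarrow> ('b::bounded_lattice \<Rightarrow> 'b) \<Rightarrow> ('a \<Rightarrow> 'b) \<Rightarrow> bool" where
  "observable perpL perpQ f \<longleftrightarrow>
     f bot = bot \<and> f top = top \<and>
     (\<forall>S. countable S \<and> separated_set perpL S \<longrightarrow> f (lub S) = lub (f ` S)) \<and>
     (\<forall>A B. A \<le> perpL B \<longrightarrow> f A \<le> perpQ (f B))"

definition logic_hom ::
  "('a::bounded_lattice \<Rightarrow> 'a) \<Rightarrow> ('b::bounded_lattice \<Rightarrow> 'b) \<Rightarrow> ('a \<Rightarrow> 'b) \<Rightarrow> bool" where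
  "logic_hom perpL perpQ f \<longleftrightarrow>
     f bot = bot \<and> f top = top \<and>
     (\<forall>A. f (perpL A) = perpQ (f A)) \<and>
     (\<forall>A B. f (sup A B) = sup (f A) (f B)) \<and>
     (\<forall>A B. f (inf A B) = inf (f A) (f B))"

end

theory Submission
  imports Defs
begin

lemma lub_pair: "lub {a, b::'a::lattice} = sup a b"
proof -
  have "is_lub {a,b} (sup a b)" unfolding is_lub_def by auto
  moreover have "\<And>x y. is_lub {a,b} x \<Longrightarrow> is_lub {a,b} y \<Longrightarrow> x = y"
    unfolding is_lub_def by (meson antisym)
  ultimately show ?thesis unfolding lub_def by (metis theI)
qed

lemma demorgan:
  fixes perp :: "'a::bounded_lattice \<Rightarrow> 'a"
  assumes "involution_lattice perp"
  shows "perp (sup x y) = inf (perp x) (perp y)"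
proof -
  have inv: "\<And>A. perp (perp A) = A" and mon: "\<And>A B. A \<le> B \<Longrightarrow> perp B \<le> perp A"
    using assms unfolding involution_lattice_def by auto
  have 1: "perp (sup x y) \<le> inf (perp x) (perp y)" by (simp add: mon)
  have "x \<le> perp (inf (perp x) (perp y))" by (metis inv mon inf_le1)
  moreover have "y \<le> perp (inf (perp x) (perp y))" by (metis inv mon inf_le2)
  ultimately have "sup x y \<le> perp (inf (perp x) (perp y))" by simp
  hence "inf (perp x) (perp y) \<le> perp (sup x y)" by (metis inv mon)
  with 1 show ?thesis by (rule antisym)
qed

lemma sep_sup:
  assumes L: "is_logic perpL" and O: "observable perpL perpQ f" and AB: "A \<le> perpL B"
  shows "f (sup A B) = sup (f A) (f B)"
proof (cases "A = B")
  case True thus ?thesis by simp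
next
  case False
  have inv: "\<And>A. perpL (perpL A) = A" and mon: "\<And>A B. A \<le> B \<Longrightarrow> perpL B \<le> perpL A"
    using L unfolding is_logic_def involution_lattice_def by auto
  have "B \<le> perpL A" using AB by (metis inv mon)
  hence "separated_set perpL {A,B}" using AB unfolding separated_set_def by auto
  moreover have "countable {A,B}" by simp
  ultimately have "f (lub {A,B}) = lub (f ` {A,B})" using O unfolding observable_def by blast
  thus ?thesis by (simp add: lub_pair)
qed

theorem lemma3p2:
  fixes perpL :: "'a::bounded_lattice \<Rightarrow> 'a"
    and perpQ :: "'b::bounded_lattice \<Rightarrow> 'b"
    and f :: "'a \<Rightarrow> 'b"
  assumes "is_logic perpL"
    and "involution_lattice perpQ"
    and "observable perpL perpQ f"
  shows "(\<forall>A B. A \<le> B \<longrightarrow> f A \<le> f B)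
    \<and> (is_boolean_logic perpL \<longrightarrow> (\<forall>A B. f (sup A B) = sup (f A) (f B)))
    \<and> (\<forall>A. f (perpL A) \<le> perpQ (f A))
    \<and> (is_logic perpQ \<longrightarrow> (\<forall>A. f (perpL A) = perpQ (f A)))
    \<and> (is_boolean_logic perpL \<and> is_logic perpQ \<longrightarrow> logic_hom perpL perpQ f)"
proof -
  note L = assms(1) and Q = assms(2) and O = assms(3)
  have inv: "\<And>A. perpL (perpL A) = A" and mon: "\<And>A B. A \<le> B \<Longrightarrow> perpL B \<le> perpL A"
    and compl: "\<And>A. inf A (perpL A) = bot \<and> sup A (perpL A) = top"
    and om: "\<And>A B. A \<le> B \<Longrightarrow> B = sup A (inf (perpL A) B)"
    using L unfolding is_logic_def involution_lattice_def by auto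
  have invQ: "\<And>A. perpQ (perpQ A) = A" and monQ: "\<And>A B. A \<le> B \<Longrightarrow> perpQ B \<le> perpQ A"
    using Q unfolding involution_lattice_def by auto
  have fb: "f bot = bot" and ft: "f top = top"
    and iii: "\<And>A B. A \<le> perpL B \<Longrightarrow> f A \<le> perpQ (f B)"
    using O unfolding observable_def by auto
  have sep: "\<And>A B. A \<le> perpL B \<Longrightarrow> f (sup A B) = sup (f A) (f B)"
    using sep_sup[OF L O] by blast
  have a: "\<And>A B. A \<le> B \<Longrightarrow> f A \<le> f B"
  proof -
    fix A B :: 'a assume "A \<le> B"
    hence B: "B = sup A (inf (perpL A) B)" by (rule om)
    have "inf (perpL A) B \<le> perpL A" by simp
    hence "A \<le> perpL (inf (perpL A) B)" by (metis inv mon)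
    hence "f B = sup (f A) (f (inf (perpL A) B))" using sep B by metis
    thus "f A \<le> f B" by (metis sup_ge1)
  qed
  have b: "is_boolean_logic perpL \<Longrightarrow> f (sup A B) = sup (f A) (f B)" for A B
  proof -
    assume bl: "is_boolean_logic perpL"
    have "sup A (inf (perpL A) B) = inf (sup A (perpL A)) (sup A B)"
      using bl unfolding is_boolean_logic_def by blast
    hence e: "sup A B = sup A (inf (perpL A) B)" using compl by simp
    have "A \<le> perpL (inf (perpL A) B)" by (metis inv mon inf_le1)
    hence "f (sup A B) = sup (f A) (f (inf (perpL A) B))" using sep e by metis
    also have "\<dots> \<le> sup (f A) (f B)" using a[of "inf (perpL A) B" B] by (simp add: le_supI2)
    finally have "f (sup A B) \<le> sup (f A) (f B)" .
    moreover have "sup (f A) (f B) \<le> f (sup A B)" using a by simp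
    ultimately show ?thesis by (rule antisym)
  qed
  have c: "\<And>A. f (perpL A) \<le> perpQ (f A)" using iii by simp
  have d: "is_logic perpQ \<Longrightarrow> f (perpL A) = perpQ (f A)" for A
  proof -
    assume lq: "is_logic perpQ"
    have complQ: "\<And>A. inf A (perpQ A) = bot \<and> sup A (perpQ A) = top"
      and omQ: "\<And>A B. A \<le> B \<Longrightarrow> B = sup A (inf (perpQ A) B)"
      using lq unfolding is_logic_def by auto
    let ?x = "f A" and ?y = "f (perpL A)"
    have "A \<le> perpL (perpL A)" by (simp add: inv)
    hence "f (sup A (perpL A)) = sup ?x ?y" by (rule sep)
    hence s: "sup ?x ?y = top" using compl ft by simp
    have pt: "perpQ top = bot" using complQ[of top] by simp
    have "?y \<le> perpQ ?x" by (rule c)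
    hence "perpQ ?x = sup ?y (inf (perpQ ?y) (perpQ ?x))" by (rule omQ)
    also have "inf (perpQ ?y) (perpQ ?x) = perpQ (sup ?y ?x)" using demorgan[OF Q] by simp
    also have "\<dots> = bot" using s pt by (simp add: sup_commute)
    finally show ?thesis by simp
  qed
  have e: "is_boolean_logic perpL \<and> is_logic perpQ \<Longrightarrow> logic_hom perpL perpQ f"
  proof -
    assume h: "is_boolean_logic perpL \<and> is_logic perpQ"
    have "f (inf A B) = inf (f A) (f B)" for A B
    proof -
      have LI: "involution_lattice perpL" using L unfolding is_logic_def by simp
      have "inf A B = perpL (sup (perpL A) (perpL B))" using demorgan[OF LI] inv by simp
      hence "f (inf A B) = perpQ (sup (perpQ (f A)) (perpQ (f B)))" using b d h by simp
      thus ?thesis using demorgan[OF Q] invQ by simp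
    qed
    thus ?thesis unfolding logic_hom_def using fb ft b d h by simp
  qed
  show ?thesis using a b c d e by (intro conjI allI impI) auto
qed

end
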